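(* Let $p$ be a prime, $a\ge 1$ an integer, $\tilde\chi$ a Dirichlet character modulo $p^a$, and $b:=\lceil a/3\rceil$. (i) If $p$ is odd, there exists an integer $L$, depending only on $\tilde\chi,p,a,b$ (and not on $x$), such that for all $x\in\mathbb{Z}$, $$\tilde\chi(1+p^b x)=\exp\!\left(\frac{4\pi i\,L\,x}{p^{a-b}}-\frac{2\pi i\,L\,x^2}{p^{a-2b}}\right).$$ (ii) If $p=2$ and $a>3$, there exists an integer $L_1$, depending only on $\tilde\chi$ and $b$ (and not on $x$), such that for all $x\in\mathbb{Z}$, $$\tilde\chi(1+2^b x)=\exp\!\left(\frac{2\pi i\,L_1\,x}{2^{a-b}}-\frac{\pi i\,L_1\,x^2}{2^{a-2b}}\right).$$ (iii) If $p=2$ and $a\le 3$, there exist integers $L_2,L_3$ with $-1\le L_2,L_3\le 2$ such that $\tilde\chi(1+2^b x)=(-1)^{(L_2x+L_3x^2)/2}$ for all $x\in\mathbb{Z}$ (here $L_2x+L_3x^2$ is always even). *)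

theory Defs
  imports "HOL-Analysis.Analysis"
begin

definition dirichlet_character :: "nat \<Rightarrow> (int \<Rightarrow> complex) \<Rightarrow> bool" where
  "dirichlet_character q chi \<longleftrightarrow>
     q \<ge> 1 \<and>
     (\<forall>m n. chi (m * n) = chi m * chi n) \<and>
     (\<forall>n. chi (n + int q) = chi n) \<and>
     (\<forall>n. chi n = 0 \<longleftrightarrow> \<not> coprime n (int q))"

end

theory Submission
  imports Defs
begin

lemma chi_period:
  assumes dc: "dirichlet_character Q chi" and d: "int Q dvd m - n"
  shows "chi m = chi n"
proof -
  have per: "chi (n + int Q) = chi n" for n using dc by (simp add: dirichlet_character_def)
  have A: "chi (n + int Q * int k) = chi n" for n k
  proof (induction k arbitrary: n)
    case 0 then show ?case by simp
  next
    case (Suc k)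
    have e: "n + int Q * int (Suc k) = (n + int Q * int k) + int Q" by (simp add: algebra_simps)
    show ?case unfolding e by (rule trans[OF per Suc])
  qed
  have B: "chi (n + int Q * z) = chi n" for n z
  proof (cases "z \<ge> 0")
    case True then obtain k where "z = int k" by (metis nonneg_int_cases)
    then show ?thesis using A by simp
  next
    case False then obtain k where k: "z = - int k" by (metis add.inverse_inverse neg_0_le_iff_le nonneg_int_cases linorder_le_cases)
    have "chi n = chi ((n + int Q * z) + int Q * int k)" using k by simp
    then show ?thesis using A by simp
  qed
  from d obtain z where "m - n = int Q * z" by (auto simp: dvd_def)
  then have "m = n + int Q * z" by simp
  then show ?thesis using B by simp
qed

lemma chi_one:
  assumes dc: "dirichlet_character Q chi"
  shows "chi 1 = 1"
proof -
  have "chi (1*1) = chi 1 * chi 1" using dc unfolding dirichlet_character_def by blast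
  then have "chi 1 = chi 1 * chi 1" by simp
  moreover have "chi 1 \<noteq> 0" using dc unfolding dirichlet_character_def by simp
  ultimately show ?thesis by (metis mult_cancel_right2)
qed

lemma generic:
  fixes q e :: int and N Q :: nat
  assumes dc: "dirichlet_character Q chi" and QN: "int Q = q * int N" and Npos: "N \<ge> 1"
    and Nq: "int N dvd q^2" and Ne: "int N dvd 2*e - q"
    and cop: "\<And>z. coprime (1 - e*z) (int N)"
  shows "\<exists>M::int. \<forall>x. chi (1 + q*x) = exp (2*pi*\<i> * of_int M * of_int (x - e*x^2) / of_nat N)"
proof -
  define f where "f x = chi (1 + q*x)" for x
  define lam where "lam x = x - e*x^2" for x :: int
  have fper: "f x = f y" if "int N dvd x - y" for x y
  proof -
    from that obtain k where k: "x - y = int N*k" by (auto simp: dvd_def)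
    have "(1+q*x) - (1+q*y) = q*(x-y)" by (simp add: algebra_simps)
    also have "\<dots> = int Q * k" using k QN by simp
    finally show ?thesis unfolding f_def by (intro chi_period[OF dc]) auto
  qed
  have fmult: "f (x + y + q*x*y) = f x * f y" for x y
  proof -
    have "(1+q*x)*(1+q*y) = 1 + q*(x+y+q*x*y)" by (simp add: algebra_simps)
    then show ?thesis using dc unfolding f_def dirichlet_character_def by metis
  qed
  have f0: "f 0 = 1" unfolding f_def using chi_one[OF dc] by simp
  have lamhom: "int N dvd lam (x+y+q*x*y) - (lam x + lam y)" for x y
  proof -
    obtain k where k: "2*e - q = int N*k" using Ne by (auto simp: dvd_def)
    obtain j where j: "q^2 = int N*j" using Nq by (auto simp: dvd_def)
    have "lam (x+y+q*x*y) - (lam x + lam y) = - x*y*(2*e-q) - ((2*e-q)*q + q^2)*x*y*(x+y) - e*q^2*x^2*y^2"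
      unfolding lam_def by algebra
    also have "\<dots> = int N * (-k*x*y - (k*q + j)*x*y*(x+y) - e*j*x^2*y^2)"
      unfolding k j by (simp add: algebra_simps)
    finally show ?thesis by (metis dvd_triv_left)
  qed
  have laminj: "int N dvd x - y" if "int N dvd lam x - lam y" for x y
  proof -
    have "lam x - lam y = (x - y)*(1 - e*(x+y))" by (simp add: lam_def algebra_simps power2_eq_square)
    then have "int N dvd (x - y)*(1 - e*(x+y))" using that by simp
    moreover have "coprime (int N) (1 - e*(x+y))" using cop coprime_commute by blast
    ultimately show ?thesis using coprime_dvd_mult_left_iff by blast
  qed
  have lamsurj: "\<exists>x. int N dvd lam x - t" for t
  proof -
    define g where "g x = lam x mod int N" for x
    have Np: "int N > 0" using Npos by simp
    have "inj_on g {0..<int N}"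
    proof (rule inj_onI)
      fix x y assume x: "x \<in> {0..<int N}" and y: "y \<in> {0..<int N}" and "g x = g y"
      then have "int N dvd lam x - lam y" unfolding g_def by (simp add: mod_eq_dvd_iff)
      then have "int N dvd x - y" by (rule laminj)
      then have "x mod int N = y mod int N" by (simp add: mod_eq_dvd_iff)
      then show "x = y" using x y by simp
    qed
    moreover have "g ` {0..<int N} \<subseteq> {0..<int N}" unfolding g_def using Np by auto
    ultimately have "g ` {0..<int N} = {0..<int N}" by (intro endo_inj_surj) auto
    moreover have "t mod int N \<in> {0..<int N}" using Np by auto
    ultimately obtain x where "g x = t mod int N" by (metis imageE)
    then have "int N dvd lam x - t" unfolding g_def by (simp add: mod_eq_dvd_iff)
    then show ?thesis by blast
  qed
  obtain x1 where x1: "int N dvd lam x1 - 1" using lamsurj by blast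
  define w where "w = f x1"
  have claim: "\<forall>x. int N dvd lam x - int n \<longrightarrow> f x = w^n" for n :: nat
  proof (induction n)
    case 0
    show ?case
    proof (intro allI impI)
      fix x assume "int N dvd lam x - int 0"
      then have "int N dvd lam x - lam 0" by (simp add: lam_def)
      then have "int N dvd x - 0" by (rule laminj)
      then show "f x = w^0" using fper f0 by simp
    qed
  next
    case (Suc n)
    show ?case
    proof (intro allI impI)
      fix x assume hx: "int N dvd lam x - int (Suc n)"
      obtain y where hy: "int N dvd lam y - int n" using lamsurj by blast
      define z where "z = y + x1 + q*y*x1"
      have hz: "int N dvd lam z - (lam y + lam x1)" unfolding z_def by (rule lamhom)
      have "lam x - lam z = (lam x - int (Suc n)) - (lam z - (lam y + lam x1)) - (lam y - int n) - (lam x1 - 1)"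
        by simp
      then have "int N dvd lam x - lam z" using hx hy hz x1
        by (metis dvd_add dvd_diff)
      then have "int N dvd x - z" by (rule laminj)
      then have "f x = f z" by (rule fper)
      also have "\<dots> = f y * f x1" unfolding z_def by (rule fmult)
      also have "\<dots> = w^n * w" using Suc hy w_def by simp
      finally show "f x = w ^ Suc n" by simp
    qed
  qed
  have "w ^ N = 1"
  proof -
    have "int N dvd lam 0 - int N" by (simp add: lam_def)
    then have "f 0 = w ^ N" using claim by blast
    then show ?thesis using f0 by simp
  qed
  then obtain j where wj: "w = exp (2 * of_real pi * \<i> * of_nat j / of_nat N)"
    using complex_roots_unity[OF Npos] by blast
  show ?thesis
  proof (intro exI allI)
    fix x
    define r where "r = lam x mod int N"
    define d where "d = lam x div int N"
    have rpos: "r \<ge> 0" using Npos by (simp add: r_def)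
    have lx: "lam x = r + int N * d" by (simp add: r_def d_def)
    have "int N dvd lam x - int (nat r)" using rpos lx by simp
    then have "chi (1 + q*x) = w ^ nat r" using claim unfolding f_def by blast
    also have "\<dots> = exp (of_nat (nat r) * (2 * of_real pi * \<i> * of_nat j / of_nat N))"
      unfolding wj by (rule exp_of_nat_mult[symmetric])
    also have "\<dots> = exp (2*pi*\<i> * of_int (int j) * of_int (lam x) / of_nat N)"
    proof -
      have c: "(of_int (lam x) :: complex) = of_int r + of_nat N * of_int d"
        using lx by simp
      have c2: "(of_nat (nat r) :: complex) = of_int r" using rpos by simp
      have "of_nat (nat r) * (2 * of_real pi * \<i> * of_nat j / of_nat N) =
         2*pi*\<i> * of_int (int j) * of_int (lam x) / of_nat N + of_int (2 * (- int j * d)) * pi * \<i>"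
        unfolding c c2 using Npos by (simp add: field_simps)
      then show ?thesis by (subst exp_eq) blast
    qed
    also have "\<dots> = exp (2*pi*\<i> * of_int (int j) * of_int (x - e*x^2) / of_nat N)"
      by (simp add: lam_def)
    finally show "chi (1 + q*x) = exp (2*pi*\<i> * of_int (int j) * of_int (x - e*x^2) / of_nat N)" .
  qed
qed


lemma neg_one_powi: "(-1::complex) powi n = (if even n then 1 else -1)"
  by (simp add: power_int_minus_left)

lemma sign_even:
  fixes L2 L3 x :: int assumes "even (L2+L3)"
  shows "even (L2*x + L3*x^2)"
proof -
  have "L2*x + L3*x^2 = (L2+L3)*x + L3*(x*x - x)" by (simp add: algebra_simps power2_eq_square)
  moreover have "even (x*x - x)" by (cases "even x") auto
  ultimately show ?thesis using assms by simp
qed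

lemma sign_per:
  fixes L2 L3 x :: int assumes ev: "even (L2+L3)"
  shows "(-1::complex) powi ((L2*x + L3*x^2) div 2) = (-1) powi ((L2*(x mod 4) + L3*(x mod 4)^2) div 2)"
proof -
  define r where "r = x mod 4"
  define d where "d = x div 4"
  have x: "x = r + 4*d" by (simp add: r_def d_def)
  define A where "A = L2*r + L3*r^2"
  define K where "K = 2*L2*d + L3*(4*r*d + 8*d^2)"
  have "L2*x + L3*x^2 = A + 2*K" unfolding x A_def K_def by (simp add: algebra_simps power2_eq_square)
  moreover have "even A" unfolding A_def using sign_even[OF ev] by blast
  ultimately have "(L2*x + L3*x^2) div 2 = A div 2 + K" by auto
  moreover have "even K" unfolding K_def by simp
  ultimately show ?thesis unfolding neg_one_powi r_def[symmetric] A_def[symmetric] by auto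
qed

lemma part3:
  assumes dc: "dirichlet_character (2^a) chi" and a3: "a \<le> 3"
  shows "\<exists>L2 L3::int. -1 \<le> L2 \<and> L2 \<le> 2 \<and> -1 \<le> L3 \<and> L3 \<le> 2 \<and>
          (\<forall>x::int. even (L2 * x + L3 * x ^ 2) \<and>
             chi (1 + 2 * x) = (-1 :: complex) powi ((L2 * x + L3 * x ^ 2) div 2))"
proof -
  have per8: "chi m = chi n" if "8 dvd m - n" for m n
  proof -
    have "(2::int)^a dvd 2^3" using a3 by (rule le_imp_power_dvd)
    then have "int (2^a) dvd m - n" using that by (simp add: dvd_trans)
    then show ?thesis by (rule chi_period[OF dc])
  qed
  have mult: "chi (m*n) = chi m * chi n" for m n using dc by (simp add: dirichlet_character_def)
  define s where "s = chi 3"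
  define t where "t = chi 5"
  have c1: "chi 1 = 1" by (rule chi_one[OF dc])
  have "s^2 = 1" unfolding s_def power2_eq_square using mult[of 3 3] per8[of 9 1] c1 by simp
  then have s: "s = 1 \<or> s = -1" by (simp add: power2_eq_1_iff)
  have "t^2 = 1" unfolding t_def power2_eq_square using mult[of 5 5] per8[of 25 1] c1 by simp
  then have t: "t = 1 \<or> t = -1" by (simp add: power2_eq_1_iff)
  have c7: "chi 7 = s*t" unfolding s_def t_def using mult[of 3 5] per8[of 15 7] by simp
  have val: "chi (1 + 2*x) = (if x mod 4 = 0 then 1 else if x mod 4 = 1 then s else if x mod 4 = 2 then t else s*t)" for x
  proof -
    have "8 dvd (1 + 2*x) - (1 + 2*(x mod 4))"
    proof -
      have "(1 + 2*x) - (1 + 2*(x mod 4)) = 2 * (x - x mod 4)" by simp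
      also have "\<dots> = 8 * (x div 4)" by (simp add: minus_mod_eq_mult_div)
      then show ?thesis by simp
    qed
    then have e: "chi (1 + 2*x) = chi (1 + 2*(x mod 4))" by (rule per8)
    have "x mod 4 \<in> {0,1,2,3}" by auto
    then show ?thesis unfolding e using c1 c7 s_def t_def by auto
  qed
  have pick: "\<exists>L2 L3::int. -1 \<le> L2 \<and> L2 \<le> 2 \<and> -1 \<le> L3 \<and> L3 \<le> 2 \<and>
          (\<forall>x::int. even (L2 * x + L3 * x ^ 2) \<and>
             chi (1 + 2 * x) = (-1 :: complex) powi ((L2 * x + L3 * x ^ 2) div 2))"
    if ev: "even (L2+L3)" and bnd: "-1 \<le> L2 \<and> L2 \<le> 2 \<and> -1 \<le> L3 \<and> L3 \<le> 2"
      and v: "\<And>r. r \<in> {0,1,2,3} \<Longrightarrow> (if r = 0 then 1 else if r = 1 then s else if r = 2 then t else s*t)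
                = (-1 :: complex) powi ((L2 * r + L3 * r ^ 2) div 2)" for L2 L3 :: int
  proof (intro exI conjI allI)
    fix x :: int
    show "even (L2 * x + L3 * x ^ 2)" by (rule sign_even[OF ev])
    have r: "x mod 4 \<in> {0,1,2,3}" by auto
    have "chi (1 + 2 * x) = (if x mod 4 = 0 then 1 else if x mod 4 = 1 then s else if x mod 4 = 2 then t else s*t)"
      by (rule val)
    also have "\<dots> = (-1 :: complex) powi ((L2 * (x mod 4) + L3 * (x mod 4) ^ 2) div 2)"
      by (rule v[OF r])
    also have "\<dots> = (-1 :: complex) powi ((L2 * x + L3 * x ^ 2) div 2)"
      by (rule sign_per[OF ev, symmetric])
    finally show "chi (1 + 2 * x) = (-1 :: complex) powi ((L2 * x + L3 * x ^ 2) div 2)" .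
  qed (use bnd in auto)
  from s t show ?thesis
  proof (elim disjE)
    assume hs: "s = 1" and ht: "t = 1" show ?thesis by (rule pick[of 0 0]) (use hs ht in \<open>auto simp: neg_one_powi\<close>)
  next
    assume hs: "s = 1" and ht: "t = -1" show ?thesis by (rule pick[of 1 "-1"]) (use hs ht in \<open>auto simp: neg_one_powi\<close>)
  next
    assume hs: "s = -1" and ht: "t = 1" show ?thesis by (rule pick[of 2 0]) (use hs ht in \<open>auto simp: neg_one_powi\<close>)
  next
    assume hs: "s = -1" and ht: "t = -1" show ?thesis by (rule pick[of 1 1]) (use hs ht in \<open>auto simp: neg_one_powi\<close>)
  qed
qed


theorem lemma2:
  fixes p a b :: nat and chi :: "int \<Rightarrow> complex"
  assumes "prime p" and "a \<ge> 1"
    and "dirichlet_character (p ^ a) chi"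
    and "b = nat \<lceil>real a / 3\<rceil>"
  shows
    "(odd p \<longrightarrow>
       (\<exists>L::int. \<forall>x::int.
          chi (1 + int p ^ b * x) =
            exp (4 * pi * \<i> * of_int L * of_int x / complex_of_real (real p powi (int a - int b))
                 - 2 * pi * \<i> * of_int L * of_int (x ^ 2) / complex_of_real (real p powi (int a - 2 * int b)))))
     \<and> (p = 2 \<and> a > 3 \<longrightarrow>
       (\<exists>L1::int. \<forall>x::int.
          chi (1 + 2 ^ b * x) =
            exp (2 * pi * \<i> * of_int L1 * of_int x / complex_of_real (2 powi (int a - int b))
                 - pi * \<i> * of_int L1 * of_int (x ^ 2) / complex_of_real (2 powi (int a - 2 * int b)))))
     \<and> (p = 2 \<and> a \<le> 3 \<longrightarrow>
       (\<exists>L2 L3::int. -1 \<le> L2 \<and> L2 \<le> 2 \<and> -1 \<le> L3 \<and> L3 \<le> 2 \<and>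
          (\<forall>x::int. even (L2 * x + L3 * x ^ 2) \<and>
             chi (1 + 2 ^ b * x) = (-1 :: complex) powi ((L2 * x + L3 * x ^ 2) div 2))))"
proof -
  note pr = assms(1) and a1 = assms(2) and dc = assms(3) and bdef = assms(4)
  have cc: "of_int \<lceil>real a / 3\<rceil> - 1 < real a / 3" "real a / 3 \<le> of_int \<lceil>real a / 3\<rceil>"
    using ceiling_correct by blast+
  have cpos: "\<lceil>real a / 3\<rceil> \<ge> 0" using cc(2) by (smt (verit) of_int_less_0_iff of_nat_0_le_iff divide_nonneg_pos)
  have rb: "real b = of_int \<lceil>real a / 3\<rceil>" using bdef cpos by simp
  have ab1: "a \<le> 3*b" using cc(2) rb by linarith
  have ab2: "3*b \<le> a + 2" using cc(1) rb by linarith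
  have b1: "b \<ge> 1" using ab1 a1 by linarith
  have ba: "b \<le> a" using ab2 a1 by linarith
  have p0: "p > 0" using pr prime_gt_0_nat by blast
  have pi: "prime (int p)" using pr by simp
  show ?thesis
  proof (intro conjI impI)
    assume odd: "odd p"
    define q where "q = int p ^ b"
    define N where "N = p ^ (a - b)"
    define h where "h = (int p ^ a + 1) div 2"
    define e where "e = q * h"
    have "even (int p ^ a + 1)" using odd by simp
    then have h2: "2 * h = int p ^ a + 1" unfolding h_def by (rule dvd_mult_div_cancel)
    have QN: "int (p^a) = q * int N" unfolding q_def N_def using ba
      by (simp add: power_add[symmetric])
    have Npos: "N \<ge> 1" unfolding N_def using p0 by simp
    have Nq: "int N dvd q^2" unfolding N_def q_def using ab1
      by (simp add: power_mult[symmetric] le_imp_power_dvd)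
    have Ne: "int N dvd 2*e - q"
    proof -
      have "2*e - q = q*(2*h) - q" unfolding e_def by (simp add: algebra_simps)
      also have "\<dots> = q * int p ^ a" unfolding h2 by (simp add: algebra_simps)
      finally have "2*e - q = q * int p ^ a" .
      moreover have "int N dvd int p ^ a" unfolding N_def by (simp add: le_imp_power_dvd)
      ultimately show ?thesis by simp
    qed
    have cop: "coprime (1 - e*z) (int N)" for z
    proof -
      have "int p dvd e" unfolding e_def q_def using b1 by (simp add: dvd_power)
      then have "\<not> int p dvd 1 - e*z"
      proof (intro notI)
        assume dv: "int p dvd e" and d: "int p dvd 1 - e*z"
        have "int p dvd e*z" using dv by simp
        then have "int p dvd (1 - e*z) + e*z" using d by (rule dvd_add[rotated])
        then have "int p dvd 1" by simp
        then show False using pi not_prime_unit by blast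
      qed
      then have "coprime (int p) (1 - e*z)" using pi by (rule prime_imp_coprime[rotated])
      then show ?thesis unfolding N_def by (simp add: coprime_commute)
    qed
    obtain M where M: "\<forall>x. chi (1 + q*x) = exp (2*pi*\<i> * of_int M * of_int (x - e*x^2) / of_nat N)"
      using generic[OF dc QN Npos Nq Ne cop] by blast
    have r1: "complex_of_real (real p powi (int a - int b)) = of_nat N"
    proof -
      have e: "int a - int b = int (a - b)" using ba by simp
      have "(real p::real) powi (int a - int b) = real p ^ (a - b)" unfolding e by (rule power_int_of_nat)
      then show ?thesis unfolding N_def by simp
    qed
    have r2: "complex_of_real (real p powi (int a - 2 * int b)) = of_nat N / of_int q"
    proof -
      have e: "int a - 2 * int b = int (a - b) - int b" using ba by simp
      have "(real p::real) powi (int a - 2 * int b) = real p powi int (a - b) / real p powi int b"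
        unfolding e by (rule power_int_diff) (use p0 in simp)
      then have "(real p::real) powi (int a - 2 * int b) = real p ^ (a - b) / real p ^ b"
        unfolding power_int_of_nat .
      then show ?thesis unfolding N_def q_def by simp
    qed
    show "\<exists>L::int. \<forall>x::int.
          chi (1 + int p ^ b * x) =
            exp (4 * pi * \<i> * of_int L * of_int x / complex_of_real (real p powi (int a - int b))
                 - 2 * pi * \<i> * of_int L * of_int (x ^ 2) / complex_of_real (real p powi (int a - 2 * int b)))"
    proof (intro exI allI)
      fix x :: int
      have hc: "2 * (of_int h :: complex) = of_int q * of_nat N + 1"
      proof -
        have "2 * h = q * int N + 1" using h2 QN by simp
        then have "of_int (2*h) = (of_int (q * int N + 1) :: complex)" by simp
        then show ?thesis by simp
      qed
      have qnz: "(of_int q :: complex) \<noteq> 0" unfolding q_def using p0 by simp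
      have Nnz: "(of_nat N :: complex) \<noteq> 0" using Npos by simp
      have eq: "4 * pi * \<i> * of_int (M*h) * of_int x / of_nat N
                 - 2 * pi * \<i> * of_int (M*h) * of_int (x ^ 2) / (of_nat N / of_int q)
             = 2*pi*\<i> * of_int M * of_int (x - e*x^2) / of_nat N + of_int (2 * (M*x*q)) * pi * \<i>"
      proof -
        have "4 * pi * \<i> * of_int (M*h) * of_int x / of_nat N
                 - 2 * pi * \<i> * of_int (M*h) * of_int (x ^ 2) / (of_nat N / of_int q)
             - (2*pi*\<i> * of_int M * of_int (x - e*x^2) / of_nat N + of_int (2 * (M*x*q)) * pi * \<i>)
             = 2 * pi * \<i> * of_int M * of_int x * (2 * of_int h - of_int q * of_nat N - 1) / of_nat N"
          using qnz Nnz unfolding e_def by (simp add: field_simps)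
        also have "\<dots> = 0" unfolding hc by simp
        finally show ?thesis by simp
      qed
      show "chi (1 + int p ^ b * x) =
            exp (4 * pi * \<i> * of_int (M*h) * of_int x / complex_of_real (real p powi (int a - int b))
                 - 2 * pi * \<i> * of_int (M*h) * of_int (x ^ 2) / complex_of_real (real p powi (int a - 2 * int b)))"
      proof -
        have "exp (4 * pi * \<i> * of_int (M*h) * of_int x / of_nat N
                 - 2 * pi * \<i> * of_int (M*h) * of_int (x ^ 2) / (of_nat N / of_int q))
             = exp (2*pi*\<i> * of_int M * of_int (x - e*x^2) / of_nat N)"
          unfolding exp_eq using eq by blast
        then show ?thesis unfolding r1 r2 using M[rule_format, of x] unfolding q_def by simp
      qed
    qed
  next
    assume h: "p = 2 \<and> 3 < a"
    then have p2: "p = 2" and a4: "a \<ge> 4" by auto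
    have b2: "b \<ge> 2" using ab1 a4 by linarith
    define q :: int where "q = 2 ^ b"
    define N where "N = (2::nat) ^ (a - b)"
    define e :: int where "e = 2 ^ (b - 1)"
    have qe: "q = 2 * e" unfolding q_def e_def using b1
      by (metis Suc_diff_1 less_le_trans zero_less_one power_Suc)
    have QN: "int (p^a) = q * int N" unfolding q_def N_def p2 using ba
      by (simp add: power_add[symmetric])
    have Npos: "N \<ge> 1" unfolding N_def by simp
    have Nq: "int N dvd q^2" unfolding N_def q_def using ab1
      by (simp add: power_mult[symmetric] le_imp_power_dvd)
    have Ne: "int N dvd 2*e - q" using qe by simp
    have pi2: "prime (2::int)" by simp
    have cop: "coprime (1 - e*z) (int N)" for z
    proof -
      have "(2::int) dvd e" unfolding e_def using b2 by (simp add: dvd_power)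
      then have "\<not> (2::int) dvd 1 - e*z"
      proof (intro notI)
        assume dv: "(2::int) dvd e" and d: "(2::int) dvd 1 - e*z"
        have "(2::int) dvd e*z" using dv by simp
        then have "(2::int) dvd (1 - e*z) + e*z" using d by (rule dvd_add[rotated])
        then have "(2::int) dvd 1" by simp
        then show False using pi2 not_prime_unit by blast
      qed
      then have "coprime (2::int) (1 - e*z)" using pi2 by (rule prime_imp_coprime[rotated])
      then show ?thesis unfolding N_def by (simp add: coprime_commute)
    qed
    have dc2: "dirichlet_character (p ^ a) chi" by (rule dc)
    obtain M where M: "\<forall>x. chi (1 + q*x) = exp (2*pi*\<i> * of_int M * of_int (x - e*x^2) / of_nat N)"
      using generic[OF dc2 QN Npos Nq Ne cop] by blast
    have r1: "complex_of_real (2 powi (int a - int b)) = of_nat N"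
    proof -
      have e: "int a - int b = int (a - b)" using ba by simp
      have "(2::real) powi (int a - int b) = 2 ^ (a - b)" unfolding e by (rule power_int_of_nat)
      then show ?thesis unfolding N_def by simp
    qed
    have r2: "complex_of_real (2 powi (int a - 2 * int b)) = of_nat N / of_int q"
    proof -
      have e: "int a - 2 * int b = int (a - b) - int b" using ba by simp
      have "(2::real) powi (int a - 2 * int b) = 2 powi int (a - b) / 2 powi int b"
        unfolding e by (rule power_int_diff) (simp)
      then have "(2::real) powi (int a - 2 * int b) = 2 ^ (a - b) / 2 ^ b"
        unfolding power_int_of_nat .
      then show ?thesis unfolding N_def q_def by simp
    qed
    show "\<exists>L1::int. \<forall>x::int.
          chi (1 + 2 ^ b * x) =
            exp (2 * pi * \<i> * of_int L1 * of_int x / complex_of_real (2 powi (int a - int b))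
                 - pi * \<i> * of_int L1 * of_int (x ^ 2) / complex_of_real (2 powi (int a - 2 * int b)))"
    proof (intro exI allI)
      fix x :: int
      have qnz: "(of_int e :: complex) \<noteq> 0" unfolding e_def by simp
      have Nnz: "(of_nat N :: complex) \<noteq> 0" using Npos by simp
      have eq: "2 * pi * \<i> * of_int M * of_int x / of_nat N
                 - pi * \<i> * of_int M * of_int (x ^ 2) / (of_nat N / of_int q)
             = 2*pi*\<i> * of_int M * of_int (x - e*x^2) / of_nat N"
        using qnz Nnz unfolding qe by (simp add: field_simps)
      show "chi (1 + 2 ^ b * x) =
            exp (2 * pi * \<i> * of_int M * of_int x / complex_of_real (2 powi (int a - int b))
                 - pi * \<i> * of_int M * of_int (x ^ 2) / complex_of_real (2 powi (int a - 2 * int b)))"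
        unfolding r1 r2 eq using M[rule_format, of x] unfolding q_def by simp
    qed
  next
    assume h: "p = 2 \<and> a \<le> 3"
    then have b1': "b = 1" using ab2 b1 by linarith
    have dc2: "dirichlet_character (2 ^ a) chi" using dc h by simp
    show "\<exists>L2 L3::int. -1 \<le> L2 \<and> L2 \<le> 2 \<and> -1 \<le> L3 \<and> L3 \<le> 2 \<and>
          (\<forall>x::int. even (L2 * x + L3 * x ^ 2) \<and>
             chi (1 + 2 ^ b * x) = (-1 :: complex) powi ((L2 * x + L3 * x ^ 2) div 2))"
      using part3[OF dc2] h b1' by simp
  qed
qed

end
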